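(* For any finite graph $G$, if the VC-dimension of $\mathcal{B}(G)$ is at least $3$, then the VC-dimension of $\mathcal{B}(G)$ is at most $\nu_{\mathrm{bi}}(G)$.
   Context: $\mathrm{MIS}(G)$ is the set of maximal independent sets of $G$; $\mathcal{B}(G)=\{K_v: v\in V(G)\}$ with $K_v=\{I\in\mathrm{MIS}(G): v\in I\}$, a set system on ground set $\mathrm{MIS}(G)$. The VC-dimension of a set system $\mathcal{F}$ on ground set $X$ is the largest $d$ such that some $S\subseteq X$ with $|S|=d$ satisfies: for every $B\subseteq S$ there is $A\in\mathcal{F}$ with $A\cap S=B$. $\nu_{\mathrm{bi}}(G)$ is the largest $t$ such that $G$ has $2t$ distinct vertices $u_1,\dots,u_t,v_1,\dots,v_t$ with $u_iv_j\in E(G)$ iff $i=j$. *)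

theory Defs
  imports Main
begin

definition fin_graph :: "'a set \<Rightarrow> ('a \<Rightarrow> 'a \<Rightarrow> bool) \<Rightarrow> bool" where
  "fin_graph V E \<longleftrightarrow> finite V \<and> (\<forall>x y. E x y \<longrightarrow> E y x) \<and> (\<forall>x. \<not> E x x)
     \<and> (\<forall>x y. E x y \<longrightarrow> x \<in> V \<and> y \<in> V)"

definition indep_set :: "'a set \<Rightarrow> ('a \<Rightarrow> 'a \<Rightarrow> bool) \<Rightarrow> 'a set \<Rightarrow> bool" where
  "indep_set V E I \<longleftrightarrow> I \<subseteq> V \<and> (\<forall>x\<in>I. \<forall>y\<in>I. \<not> E x y)"

definition max_indep_set :: "'a set \<Rightarrow> ('a \<Rightarrow> 'a \<Rightarrow> bool) \<Rightarrow> 'a set \<Rightarrow> bool" where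
  "max_indep_set V E I \<longleftrightarrow> indep_set V E I \<and> (\<forall>x\<in>V - I. \<not> indep_set V E (insert x I))"

definition MIS :: "'a set \<Rightarrow> ('a \<Rightarrow> 'a \<Rightarrow> bool) \<Rightarrow> 'a set set" where
  "MIS V E = {I. max_indep_set V E I}"

definition Kv :: "'a set \<Rightarrow> ('a \<Rightarrow> 'a \<Rightarrow> bool) \<Rightarrow> 'a \<Rightarrow> 'a set set" where
  "Kv V E v = {I \<in> MIS V E. v \<in> I}"

definition BG :: "'a set \<Rightarrow> ('a \<Rightarrow> 'a \<Rightarrow> bool) \<Rightarrow> 'a set set set" where
  "BG V E = Kv V E ` V"

definition shatters :: "'b set set \<Rightarrow> 'b set \<Rightarrow> bool" where
  "shatters F S \<longleftrightarrow> (\<forall>B\<subseteq>S. \<exists>A\<in>F. A \<inter> S = B)"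

text \<open>VC-dimension of a set system F on ground set X (largest size of a finite
shattered subset of X; Sup of an empty/unbounded nat set is 0).\<close>
definition vc_dim :: "'b set set \<Rightarrow> 'b set \<Rightarrow> nat" where
  "vc_dim F X = Sup {card S | S. S \<subseteq> X \<and> finite S \<and> shatters F S}"

definition nu_bi :: "'a set \<Rightarrow> ('a \<Rightarrow> 'a \<Rightarrow> bool) \<Rightarrow> nat" where
  "nu_bi V E = Sup {t. \<exists>u v :: nat \<Rightarrow> 'a.
      (\<forall>i<t. u i \<in> V \<and> v i \<in> V) \<and>
      inj_on u {..<t} \<and> inj_on v {..<t} \<and> u ` {..<t} \<inter> v ` {..<t} = {} \<and>
      (\<forall>i<t. \<forall>j<t. E (u i) (v j) \<longleftrightarrow> i = j)}"

end

theory Submission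
  imports Defs
begin

lemma main_construction:
  fixes V :: "'a set" and E :: "'a \<Rightarrow> 'a \<Rightarrow> bool"
  assumes G: "fin_graph V E"
    and SM: "S \<subseteq> MIS V E" and fS: "finite S" and sh: "shatters (BG V E) S"
    and d3: "card S \<ge> 3"
  shows "\<exists>u v :: nat \<Rightarrow> 'a.
      (\<forall>i<card S. u i \<in> V \<and> v i \<in> V) \<and>
      inj_on u {..<card S} \<and> inj_on v {..<card S} \<and> u ` {..<card S} \<inter> v ` {..<card S} = {} \<and>
      (\<forall>i<card S. \<forall>j<card S. E (u i) (v j) \<longleftrightarrow> i = j)"
proof -
  define d where "d = card S"
  obtain I where bI: "bij_betw I {0..<d} S" using ex_bij_betw_nat_finite[OF fS] d_def by auto
  have Iin: "I i \<in> S" if "i < d" for i using bI that by (auto simp: bij_betw_def)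
  have Iinj: "I i = I j \<Longrightarrow> i < d \<Longrightarrow> j < d \<Longrightarrow> i = j" for i j
    using bI by (auto simp: bij_betw_def inj_on_def)
  have Imis: "max_indep_set V E (I i)" if "i < d" for i using Iin[OF that] SM by (auto simp: MIS_def)
  have Iind: "I i \<subseteq> V" "\<And>x y. x \<in> I i \<Longrightarrow> y \<in> I i \<Longrightarrow> \<not> E x y" if "i < d" for i
    using Imis[OF that] by (auto simp: max_indep_set_def indep_set_def)
  have sym: "E x y \<Longrightarrow> E y x" for x y using G by (auto simp: fin_graph_def)
  have irr: "\<not> E x x" for x using G by (auto simp: fin_graph_def)
  have EV: "E x y \<Longrightarrow> x \<in> V \<and> y \<in> V" for x y using G by (auto simp: fin_graph_def)
  have exv: "\<exists>x\<in>V. \<forall>j<d. (x \<in> I j \<longleftrightarrow> j \<noteq> i)" if "i < d" for i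
  proof -
    have "S - {I i} \<subseteq> S" by auto
    then have "\<exists>A\<in>BG V E. A \<inter> S = S - {I i}"
      by (rule sh[unfolded shatters_def, rule_format, of "S - {I i}"])
    then obtain A where A: "A \<in> BG V E" "A \<inter> S = S - {I i}" by (elim bexE)
    then obtain x where x: "x \<in> V" "A = Kv V E x" by (auto simp: BG_def)
    have "x \<in> I j \<longleftrightarrow> j \<noteq> i" if "j < d" for j
    proof -
      have "I j \<in> A \<longleftrightarrow> I j \<in> A \<inter> S" using Iin[OF that] by simp
      also have "\<dots> \<longleftrightarrow> I j \<noteq> I i" using A(2) Iin[OF that] by simp
      also have "\<dots> \<longleftrightarrow> j \<noteq> i" using Iinj[OF _ that \<open>i<d\<close>] by auto
      finally have "I j \<in> A \<longleftrightarrow> j \<noteq> i" .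
      then show ?thesis using x(2) Iin[OF that] SM by (auto simp: Kv_def)
    qed
    then show ?thesis using x(1) by blast
  qed
  then have "\<forall>i. \<exists>x. i < d \<longrightarrow> x \<in> V \<and> (\<forall>j<d. (x \<in> I j \<longleftrightarrow> j \<noteq> i))" by blast
  from choice[OF this] obtain v where v0: "\<forall>i. i < d \<longrightarrow> v i \<in> V \<and> (\<forall>j<d. (v i \<in> I j \<longleftrightarrow> j \<noteq> i))"
    by blast
  have v: "\<And>i. i < d \<Longrightarrow> v i \<in> V \<and> (\<forall>j<d. (v i \<in> I j \<longleftrightarrow> j \<noteq> i))" using v0 by blast
  have exu: "\<exists>w\<in>I i. E w (v i)" if hi: "i < d" for i
  proof -
    have nv: "v i \<notin> I i" "v i \<in> V" using v[OF that] that by auto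
    then have "\<not> indep_set V E (insert (v i) (I i))" using Imis[OF that] by (auto simp: max_indep_set_def)
    then obtain x y where xy: "x \<in> insert (v i) (I i)" "y \<in> insert (v i) (I i)" "E x y"
      using Iind[OF hi] nv by (auto simp: indep_set_def)
    then show ?thesis using Iind(2)[OF hi] irr sym by blast
  qed
  then have "\<forall>i. \<exists>w. i < d \<longrightarrow> w \<in> I i \<and> E w (v i)" by blast
  from choice[OF this] obtain u where u0: "\<forall>i. i < d \<longrightarrow> u i \<in> I i \<and> E (u i) (v i)" by blast
  have u: "\<And>i. i < d \<Longrightarrow> u i \<in> I i \<and> E (u i) (v i)" using u0 by blast
  have uV: "u i \<in> V" if "i < d" for i using u[OF that] EV by blast
  have unot: "u i \<notin> I j" if "i < d" "j < d" "j \<noteq> i" for i j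
  proof
    assume "u i \<in> I j"
    moreover have "v i \<in> I j" using v[OF that(1)] that by auto
    ultimately show False using Iind(2)[OF that(2)] u[OF that(1)] by blast
  qed
  have 1: "inj_on u {..<d}"
  proof (rule inj_onI, rule ccontr)
    fix i j assume h: "i \<in> {..<d}" "j \<in> {..<d}" "u i = u j" "i \<noteq> j"
    then have "u j \<notin> I i" using unot[of j i] by auto
    moreover have "u i \<in> I i" using u[of i] h(1) by auto
    ultimately show False using h by simp
  qed
  have 2: "inj_on v {..<d}"
  proof (rule inj_onI, rule ccontr)
    fix i j assume h: "i \<in> {..<d}" "j \<in> {..<d}" "v i = v j" "i \<noteq> j"
    then have "v j \<in> I i" using v[of j] by auto
    moreover have "v i \<notin> I i" using v[of i] h(1) by auto
    ultimately show False using h by simp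
  qed
  have 3: "u ` {..<d} \<inter> v ` {..<d} = {}"
  proof (rule ccontr)
    assume "u ` {..<d} \<inter> v ` {..<d} \<noteq> {}"
    then obtain i j where ij: "i < d" "j < d" "u i = v j" by auto
    obtain k where k: "k < d" "k \<noteq> i" "k \<noteq> j"
    proof -
      have "{0,1,2::nat} - {i,j} \<noteq> {}" by auto
      then obtain k where "k \<in> {0,1,2::nat}" "k \<noteq> i" "k \<noteq> j" by auto
      then show ?thesis using that[of k] d3 d_def by auto
    qed
    have "v j \<in> I k" using v[OF ij(2)] k by auto
    then show False using unot[OF ij(1) k(1) k(2)] ij by simp
  qed
  have 4: "\<forall>i<d. \<forall>j<d. E (u i) (v j) \<longleftrightarrow> i = j"
  proof (intro allI impI)
    fix i j assume ij: "i < d" "j < d"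
    show "E (u i) (v j) \<longleftrightarrow> i = j"
    proof
      assume e: "E (u i) (v j)"
      show "i = j"
      proof (rule ccontr)
        assume "i \<noteq> j"
        then have "v j \<in> I i" using v[OF ij(2)] ij by auto
        then show False using Iind(2)[OF ij(1)] u[OF ij(1)] e by blast
      qed
    qed (use u ij in auto)
  qed
  have 5: "\<forall>i<d. u i \<in> V \<and> v i \<in> V" using uV v by blast
  show ?thesis
    apply (rule exI[of _ u], rule exI[of _ v])
    using 1 2 3 4 5 d_def by simp
qed

theorem lemma2p13:
  fixes V :: "'a set" and E :: "'a \<Rightarrow> 'a \<Rightarrow> bool"
  assumes "fin_graph V E"
    and "vc_dim (BG V E) (MIS V E) \<ge> 3"
  shows "vc_dim (BG V E) (MIS V E) \<le> nu_bi V E"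
proof -
  define C where "C = {card S | S. S \<subseteq> MIS V E \<and> finite S \<and> shatters (BG V E) S}"
  have fV: "finite V" using assms(1) by (simp add: fin_graph_def)
  have "MIS V E \<subseteq> Pow V" by (auto simp: MIS_def max_indep_set_def indep_set_def)
  then have fM: "finite (MIS V E)" using fV by (meson finite_Pow_iff finite_subset)
  have "C \<subseteq> {..card (MIS V E)}"
  proof
    fix c assume "c \<in> C"
    then obtain T where "c = card T" "T \<subseteq> MIS V E" unfolding C_def by blast
    then show "c \<in> {..card (MIS V E)}" using card_mono[OF fM] by simp
  qed
  then have fC: "finite C" using finite_subset by blast
  have vc: "vc_dim (BG V E) (MIS V E) = Sup C" unfolding vc_dim_def C_def by simp
  have Cne: "C \<noteq> {}"
  proof
    assume "C = {}"
    then have "Sup C = 0" by (simp add: Sup_nat_def)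
    then show False using assms(2) vc by simp
  qed
  then have "Sup C \<in> C" using fC by (simp add: Sup_nat_def)
  then obtain S where S: "Sup C = card S" "S \<subseteq> MIS V E" "finite S" "shatters (BG V E) S"
    unfolding C_def mem_Collect_eq by (elim exE conjE) simp
  define N where "N = {t. \<exists>u v :: nat \<Rightarrow> 'a.
      (\<forall>i<t. u i \<in> V \<and> v i \<in> V) \<and>
      inj_on u {..<t} \<and> inj_on v {..<t} \<and> u ` {..<t} \<inter> v ` {..<t} = {} \<and>
      (\<forall>i<t. \<forall>j<t. E (u i) (v j) \<longleftrightarrow> i = j)}"
  have nb: "nu_bi V E = Sup N" unfolding nu_bi_def N_def by simp
  have "card S \<ge> 3" using assms(2) vc S(1) by simp
  from main_construction[OF assms(1) S(2-4) this]
  have "card S \<in> N" unfolding N_def mem_Collect_eq .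
  moreover have "bdd_above N"
  proof (rule bdd_aboveI)
    fix t assume "t \<in> N"
    then obtain u v where uv: "\<forall>i<t. u i \<in> V \<and> v i \<in> V" "inj_on u {..<t}"
      unfolding N_def mem_Collect_eq by (elim exE conjE) simp
    have u: "\<forall>i<t. u i \<in> V" "inj_on u {..<t}" using uv by simp_all
    have c: "card (u ` {..<t}) = t" using card_image[OF u(2)] by simp
    have "u ` {..<t} \<subseteq> V" using u(1) by auto
    then have "card (u ` {..<t}) \<le> card V" by (rule card_mono[OF fV])
    then show "t \<le> card V" unfolding c .
  qed
  ultimately have "card S \<le> Sup N" by (rule cSup_upper)
  then show ?thesis unfolding vc nb S(1) .
qed

end
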